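(* Every H\"older set $X\subseteq\mathbb{R}^d$ is simple, i.e. each $x\in X$ has a basis of neighborhoods $\mathscr U$ such that $U\cap\mathrm{int}(X)$ is connected for all $U\in\mathscr U$.
   Context: For $0<\alpha\le1$, $r,h>0$ let $\Gamma^\alpha_d(r,h)=\{(x',x_d)\in\mathbb{R}^{d-1}\times\mathbb{R}: |x'|<r,\ h(|x'|/r)^\alpha<x_d<h\}$. An open $U$ has the uniform cusp property of index $\alpha$ if for every $x\in\partial U$ there are $\epsilon>0$, some $\Gamma=\Gamma^\alpha_d(r,h)$ and $A\in O(d)$ with $y+A\Gamma\subseteq U$ for all $y\in\overline U\cap B(x,\epsilon)$. A H\"older set is a closed set $X$ with $X=\overline{\mathrm{int}(X)}\ne\emptyset$ such that $\mathrm{int}(X)$ has the uniform cusp property of some index $\alpha\in(0,1]$. *)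

theory Defs
  imports "HOL-Analysis.Analysis"
begin

text \<open>The distinguished "last" coordinate direction of the Euclidean space.
  Since the cusp property quantifies over all orthogonal transformations,
  the choice of unit vector is immaterial.\<close>
definition vert_dir :: "'a::euclidean_space" where
  "vert_dir = (SOME b. b \<in> Basis)"

text \<open>Decomposition x = (x', x_d): x_d = x \<bullet> e, x' = x - x_d e.\<close>
definition cusp :: "real \<Rightarrow> real \<Rightarrow> real \<Rightarrow> 'a::euclidean_space set" where
  "cusp \<alpha> r h = {z. norm (z - (z \<bullet> vert_dir) *\<^sub>R vert_dir) < r \<and>
      h * (norm (z - (z \<bullet> vert_dir) *\<^sub>R vert_dir) / r) powr \<alpha> < z \<bullet> vert_dir \<and>
      z \<bullet> vert_dir < h}"

definition uniform_cusp_property :: "real \<Rightarrow> 'a::euclidean_space set \<Rightarrow> bool" where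
  "uniform_cusp_property \<alpha> U \<longleftrightarrow>
     (\<forall>x\<in>frontier U. \<exists>\<epsilon>>0. \<exists>r>0. \<exists>h>0. \<exists>A::'a \<Rightarrow> 'a. orthogonal_transformation A \<and>
        (\<forall>y \<in> closure U \<inter> ball x \<epsilon>. (\<lambda>z. y + A z) ` cusp \<alpha> r h \<subseteq> U))"

definition hoelder_set :: "'a::euclidean_space set \<Rightarrow> bool" where
  "hoelder_set X \<longleftrightarrow> closed X \<and> X = closure (interior X) \<and> X \<noteq> {} \<and>
     (\<exists>\<alpha>::real. 0 < \<alpha> \<and> \<alpha> \<le> 1 \<and> uniform_cusp_property \<alpha> (interior X))"

definition nhds_basis_at :: "'a::topological_space \<Rightarrow> 'a set set \<Rightarrow> bool" where
  "nhds_basis_at x UU \<longleftrightarrow> (\<forall>U\<in>UU. x \<in> interior U) \<and>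
     (\<forall>V. open V \<and> x \<in> V \<longrightarrow> (\<exists>U\<in>UU. U \<subseteq> V))"

definition simple_set :: "'a::euclidean_space set \<Rightarrow> bool" where
  "simple_set X \<longleftrightarrow> (\<forall>x\<in>X. \<exists>UU. nhds_basis_at x UU \<and>
     (\<forall>U\<in>UU. connected (U \<inter> interior X)))"

end

theory Submission
  imports Defs
begin

lemma vert_dir_Basis: "(vert_dir::'a::euclidean_space) \<in> Basis"
  unfolding vert_dir_def by (rule someI_ex) (use nonempty_Basis in blast)

lemma vert_dir_norm: "norm (vert_dir::'a::euclidean_space) = 1"
  by (rule norm_Basis[OF vert_dir_Basis])

lemma norm_horiz_le:
  fixes w e :: "'a::euclidean_space"
  assumes "norm e = 1"
  shows "norm (w - (w \<bullet> e) *\<^sub>R e) \<le> norm w"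
proof -
  have ee: "e \<bullet> e = 1" using assms by (simp add: dot_square_norm)
  have "(norm (w - (w \<bullet> e) *\<^sub>R e))\<^sup>2 = (norm w)\<^sup>2 - (w \<bullet> e)\<^sup>2"
  proof -
    have "(norm (w - (w \<bullet> e) *\<^sub>R e))\<^sup>2 = (w - (w \<bullet> e) *\<^sub>R e) \<bullet> (w - (w \<bullet> e) *\<^sub>R e)"
      by (rule power2_norm_eq_inner)
    also have "\<dots> = w \<bullet> w - (w \<bullet> e)\<^sup>2"
      by (simp add: inner_diff_left inner_diff_right ee inner_commute power2_eq_square algebra_simps)
    finally show ?thesis by (simp add: power2_norm_eq_inner)
  qed
  then have "(norm (w - (w \<bullet> e) *\<^sub>R e))\<^sup>2 \<le> (norm w)\<^sup>2" by simp
  then show ?thesis using norm_ge_zero power2_le_imp_le by blast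
qed

lemma cusp_axis:
  assumes "0 < s" "s < h" "0 < r"
  shows "s *\<^sub>R (vert_dir::'a::euclidean_space) \<in> cusp \<alpha> r h"
proof -
  have ee: "vert_dir \<bullet> (vert_dir::'a) = 1" using inner_Basis[OF vert_dir_Basis vert_dir_Basis] by simp
  show ?thesis using assms by (simp add: cusp_def ee)
qed

lemma cusp_near_axis:
  fixes w :: "'a::euclidean_space"
  assumes "0 < \<alpha>" "0 < r" "norm w < r" "h * (norm w / r) powr \<alpha> < t - norm w"
    "t + norm w < h" "0 < h"
  shows "t *\<^sub>R vert_dir + w \<in> cusp \<alpha> r h"
proof -
  let ?e = "vert_dir :: 'a"
  have ee: "?e \<bullet> ?e = 1" using inner_Basis[OF vert_dir_Basis vert_dir_Basis] by simp
  have hpos: "0 < h" using assms by simp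
  have zd: "(t *\<^sub>R ?e + w) \<bullet> ?e = t + w \<bullet> ?e" by (simp add: inner_add_left ee)
  have hz: "t *\<^sub>R ?e + w - (t + w \<bullet> ?e) *\<^sub>R ?e = w - (w \<bullet> ?e) *\<^sub>R ?e"
    by (simp add: algebra_simps)
  have nle: "norm (w - (w \<bullet> ?e) *\<^sub>R ?e) \<le> norm w"
    by (rule norm_horiz_le) (simp add: vert_dir_norm)
  have en: "norm ?e = 1" by (rule vert_dir_norm)
  have cs: "\<bar>w \<bullet> ?e\<bar> \<le> norm w" using Cauchy_Schwarz_ineq2[of w ?e] en by simp
  have pm: "(norm (w - (w \<bullet> ?e) *\<^sub>R ?e) / r) powr \<alpha> \<le> (norm w / r) powr \<alpha>"
    by (rule powr_mono2) (use assms nle in \<open>auto intro: divide_right_mono\<close>)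
  have hm: "h * (norm (w - (w \<bullet> ?e) *\<^sub>R ?e) / r) powr \<alpha> \<le> h * (norm w / r) powr \<alpha>"
    using mult_left_mono[OF pm, of h] hpos by simp
  have c2: "- norm w \<le> w \<bullet> ?e" "w \<bullet> ?e \<le> norm w" using cs by auto
  show ?thesis unfolding cusp_def mem_Collect_eq zd hz
    using assms nle c2 hm by (intro conjI) linarith+
qed

lemma local_conn:
  fixes U :: "'a::euclidean_space set" and x :: 'a and A :: "'a \<Rightarrow> 'a"
  assumes apos: "0 < \<alpha>" and epos: "0 < \<epsilon>" and rpos: "0 < r" and hpos: "0 < h"
    and A: "orthogonal_transformation A"
    and H: "\<forall>y\<in>closure U \<inter> ball x \<epsilon>. (\<lambda>z. y + A z) ` cusp \<alpha> r h \<subseteq> U"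
    and xU: "x \<in> closure U" and rhopos: "0 < \<rho>"
  shows "\<exists>\<delta>>0. \<exists>C. connected C \<and> C \<subseteq> U \<inter> ball x \<rho> \<and> ball x \<delta> \<inter> U \<subseteq> C"
proof -
  define e where "e = (vert_dir :: 'a)"
  have en: "norm e = 1" unfolding e_def by (rule vert_dir_norm)
  define m where "m = min h \<rho>"
  define t where "t = m / 2"
  define q where "q = (t / (2*h)) powr (1/\<alpha>)"
  define \<eta> where "\<eta> = min (t/2) (min (r/2) (r*q))"
  have mpos: "0 < m" using hpos rhopos by (simp add: m_def)
  have tpos: "0 < t" using mpos by (simp add: t_def)
  have qpos: "0 < q" using tpos hpos by (simp add: q_def)
  have etapos: "0 < \<eta>" using tpos rpos qpos by (simp add: \<eta>_def)
  have "\<eta> / r \<le> q" using rpos by (simp add: \<eta>_def divide_le_eq mult.commute)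
  then have "(\<eta>/r) powr \<alpha> \<le> q powr \<alpha>"
    by (intro powr_mono2) (use apos etapos rpos in auto)
  also have "q powr \<alpha> = t / (2*h)"
    using apos tpos hpos by (simp add: q_def powr_powr)
  finally have etaq: "(\<eta>/r) powr \<alpha> \<le> t / (2*h)" .
  have heta: "h * (\<eta>/r) powr \<alpha> \<le> t/2"
    using mult_left_mono[OF etaq, of h] hpos by simp
  have eta1: "\<eta> \<le> t/2" "\<eta> \<le> r/2" by (auto simp: \<eta>_def)
  have mh: "m \<le> h" "m \<le> \<rho>" by (auto simp: m_def)
  have key: "t *\<^sub>R e + w \<in> cusp \<alpha> r h" if w: "norm w < \<eta>" for w
  proof -
    have "(norm w / r) powr \<alpha> \<le> (\<eta>/r) powr \<alpha>"
      by (intro powr_mono2) (use apos rpos w in \<open>auto intro: divide_right_mono\<close>)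
    then have "h * (norm w / r) powr \<alpha> \<le> h * (\<eta>/r) powr \<alpha>"
      using hpos by (simp add: mult_left_mono)
    then have hw: "h * (norm w / r) powr \<alpha> < t - norm w" using heta w eta1 by linarith
    show ?thesis unfolding e_def
      by (rule cusp_near_axis[OF apos rpos _ hw _ hpos]) (use w eta1 rpos hpos mh t_def mpos in auto)
  qed
  have Hx: "(\<lambda>z. x + A z) ` cusp \<alpha> r h \<subseteq> U" using H xU epos by auto
  have Alin: "linear A" using A by (rule orthogonal_transformation_linear)
  have Anorm: "\<And>v. norm (A v) = norm v" using A by (rule orthogonal_transformation_norm)
  have Ascale: "\<And>c v. A (c *\<^sub>R v) = c *\<^sub>R A v" using A by (rule orthogonal_transformation_scaleR)
  have Aadd: "\<And>u v. A (u + v) = A u + A v" using Alin by (simp add: linear_add)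
  have Asurj: "surj A" using A orthogonal_transformation_surj by blast
  define p where "p = x + t *\<^sub>R A e"
  define K where "K = ball p \<eta>"
  have KU: "K \<subseteq> U"
  proof
    fix v assume "v \<in> K"
    then have v: "dist p v < \<eta>" by (simp add: K_def)
    obtain w where w: "A w = v - p" using Asurj by (metis surjD)
    have "norm w = dist p v" using Anorm[of w] w by (simp add: dist_norm norm_minus_commute)
    then have "t *\<^sub>R e + w \<in> cusp \<alpha> r h" using key v by simp
    then have "x + A (t *\<^sub>R e + w) \<in> U" using Hx by auto
    moreover have "x + A (t *\<^sub>R e + w) = v" using w by (simp add: Aadd Ascale p_def)
    ultimately show "v \<in> U" by simp
  qed
  have Kb: "K \<subseteq> ball x \<rho>"
  proof
    fix v assume "v \<in> K"
    then have v: "dist p v < \<eta>" by (simp add: K_def)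
    have "dist x p = t" using Anorm[of e] en tpos by (simp add: p_def dist_norm)
    then have "dist x v < t + \<eta>" using dist_triangle[of x v p] v by linarith
    then show "v \<in> ball x \<rho>" using eta1 mh t_def mpos by simp
  qed
  define \<delta> where "\<delta> = min \<epsilon> \<eta>"
  have dpos: "0 < \<delta>" using epos etapos by (simp add: \<delta>_def)
  define S where "S y = (\<lambda>s. y + s *\<^sub>R A e) ` {0..t}" for y
  have SU: "S y \<subseteq> U \<inter> ball x \<rho>" if y: "y \<in> ball x \<delta> \<inter> U" for y
  proof
    fix z assume "z \<in> S y"
    then obtain s where s: "0 \<le> s" "s \<le> t" and z: "z = y + s *\<^sub>R A e" by (auto simp: S_def)
    have "z \<in> U"
    proof (cases "s = 0")
      case True then show ?thesis using z y by simp
    next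
      case False
      then have "s *\<^sub>R e \<in> cusp \<alpha> r h" unfolding e_def
        by (intro cusp_axis) (use s rpos mh t_def mpos in auto)
      moreover have "y \<in> closure U \<inter> ball x \<epsilon>" using y closure_subset by (auto simp: \<delta>_def)
      ultimately have "y + A (s *\<^sub>R e) \<in> U" using H by blast
      then show ?thesis using z by (simp add: Ascale)
    qed
    moreover have "dist x z < \<rho>"
    proof -
      have "norm (s *\<^sub>R A e) = s" using s Anorm[of e] en by simp
      then have "dist y z = s" using z by (simp add: dist_norm)
      moreover have "dist x y < \<eta>" using y by (simp add: \<delta>_def)
      ultimately have "dist x z < \<eta> + t" using dist_triangle[of x z y] s by linarith
      then show ?thesis using eta1 mh t_def mpos by simp
    qed
    ultimately show "z \<in> U \<inter> ball x \<rho>" by simp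
  qed
  have Sc: "connected (S y)" for y unfolding S_def
    by (intro connected_continuous_image connected_Icc continuous_intros)
  have SK: "y + t *\<^sub>R A e \<in> S y \<inter> K" if y: "y \<in> ball x \<delta> \<inter> U" for y
  proof -
    have "dist p (y + t *\<^sub>R A e) = dist x y" by (simp add: p_def dist_norm)
    then have "dist p (y + t *\<^sub>R A e) < \<eta>" using y by (simp add: \<delta>_def)
    then show ?thesis using tpos by (auto simp: S_def K_def)
  qed
  define C where "C = \<Union> (insert K ((\<lambda>y. K \<union> S y) ` (ball x \<delta> \<inter> U)))"
  have "connected C" unfolding C_def
  proof (rule connected_Union)
    fix T assume "T \<in> insert K ((\<lambda>y. K \<union> S y) ` (ball x \<delta> \<inter> U))"
    then show "connected T"
    proof
      assume "T = K" then show ?thesis by (simp add: K_def)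
    next
      assume "T \<in> (\<lambda>y. K \<union> S y) ` (ball x \<delta> \<inter> U)"
      then obtain y where y: "y \<in> ball x \<delta> \<inter> U" and T: "T = K \<union> S y" by auto
      show ?thesis unfolding T using SK[OF y] Sc[of y]
        by (intro connected_Un) (auto simp: K_def)
    qed
  next
    have "p \<in> \<Inter> (insert K ((\<lambda>y. K \<union> S y) ` (ball x \<delta> \<inter> U)))"
      using etapos by (auto simp: K_def)
    then show "\<Inter> (insert K ((\<lambda>y. K \<union> S y) ` (ball x \<delta> \<inter> U))) \<noteq> {}" by blast
  qed
  moreover have "C \<subseteq> U \<inter> ball x \<rho>" unfolding C_def using KU Kb SU by blast
  moreover have "ball x \<delta> \<inter> U \<subseteq> C"
  proof
    fix y assume y: "y \<in> ball x \<delta> \<inter> U"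
    have "y \<in> S y" using tpos by (force simp: S_def)
    then show "y \<in> C" unfolding C_def using y by blast
  qed
  ultimately show ?thesis using dpos by blast
qed

theorem proposition3p9:
  fixes X :: "'a::euclidean_space set"
  assumes "hoelder_set X"
  shows "simple_set X"
proof -
  from assms obtain \<alpha> where XX: "X = closure (interior X)" and apos: "0 < \<alpha>"
    and ucp: "uniform_cusp_property \<alpha> (interior X)"
    unfolding hoelder_set_def by blast
  have loc: "\<exists>\<delta>>0. \<exists>C. connected C \<and> C \<subseteq> interior X \<inter> ball x \<rho> \<and> ball x \<delta> \<inter> interior X \<subseteq> C"
    if x: "x \<in> X" and rho: "0 < \<rho>" for x \<rho>
  proof (cases "x \<in> interior X")
    case True
    then obtain d where d: "0 < d" "ball x d \<subseteq> interior X"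
      using open_contains_ball open_interior by blast
    define \<delta> where "\<delta> = min d \<rho>"
    have "ball x \<delta> \<subseteq> ball x d" "ball x \<delta> \<subseteq> ball x \<rho>" by (auto simp: \<delta>_def)
    then show ?thesis using d rho
      by (intro exI[of _ \<delta>] conjI exI[of _ "ball x \<delta>"]) (auto simp: \<delta>_def)
  next
    case False
    have "x \<in> closure (interior X)" using x XX by simp
    then have xf: "x \<in> frontier (interior X)" using False by (simp add: frontier_def)
    then obtain \<epsilon> r h and A :: "'a \<Rightarrow> 'a" where "\<epsilon> > 0" "r > 0" "h > 0"
      "orthogonal_transformation A"
      "\<forall>y \<in> closure (interior X) \<inter> ball x \<epsilon>. (\<lambda>z. y + A z) ` cusp \<alpha> r h \<subseteq> interior X"
      using ucp unfolding uniform_cusp_property_def by blast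
    from local_conn[OF apos this \<open>x \<in> closure (interior X)\<close> rho] show ?thesis .
  qed
  show ?thesis unfolding simple_set_def
  proof
    fix x assume x: "x \<in> X"
    let ?UU = "{U. x \<in> interior U \<and> connected (U \<inter> interior X)}"
    have "nhds_basis_at x ?UU" unfolding nhds_basis_at_def
    proof (intro conjI allI impI)
      show "\<forall>U\<in>?UU. x \<in> interior U" by blast
    next
      fix V assume V: "open V \<and> x \<in> V"
      then obtain \<rho> where rho: "0 < \<rho>" "ball x \<rho> \<subseteq> V" using open_contains_ball by blast
      obtain \<delta> C where d: "0 < \<delta>" "connected C" "C \<subseteq> interior X \<inter> ball x \<rho>"
        "ball x \<delta> \<inter> interior X \<subseteq> C" using loc[OF x rho(1)] by blast
      define U where "U = ball x (min \<delta> \<rho>) \<union> C"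
      have "ball x (min \<delta> \<rho>) \<subseteq> interior U"
        by (rule interior_maximal) (auto simp: U_def)
      then have "x \<in> interior U" using d rho by auto
      moreover have "U \<inter> interior X = C" using d by (auto simp: U_def)
      moreover have "U \<subseteq> V" using d rho by (auto simp: U_def)
      ultimately show "\<exists>U\<in>?UU. U \<subseteq> V" using d by blast
    qed
    then show "\<exists>UU. nhds_basis_at x UU \<and> (\<forall>U\<in>UU. connected (U \<inter> interior X))" by blast
  qed
qed

end
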